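(* Let $\lambda$ be a cardinal, let $M\prec\mathcal{C}$ be $\lambda$-saturated, let $A$ be a set with $P^M\subseteq A\subseteq M$, and let $p(\bar x)$ be a partial type over $A$ with $|p|<\lambda$, where $\bar x$ is a (possibly infinite) tuple of fewer than $\lambda$ variables. Then there is $p^*(\bar x)\in S_*(A)$ extending $p$.
   Context: Standing assumptions: $T$ is a complete first-order theory in a vocabulary with no function symbols, $P$ a unary predicate, $\mathcal{C}$ a monster model of $T$; all models are elementary submodels of $\mathcal{C}$ and all sets are subsets of $\mathcal{C}$. $P^A=A\cap P^{\mathcal{C}}$. Assumed throughout: $P$ is stably embedded (subsets of $P^{\mathcal{C}}$ definable with parameters in $\mathcal{C}$ are definable in $\mathcal{C}|_P$ with parameters from $P^{\mathcal{C}}$), $0$-definable subsets of $P^{\mathcal{C}}$ are $0$-definable in $\mathcal{C}|_P$, and $T$ has quantifier elimination. A set $A$ is complete if for every formula $\psi(\bar x,\bar y)$ and $\bar b\subseteq A$, $\models(\exists\bar x\in P)\psi(\bar x,\bar b)$ implies $\models\psi(\bar a,\bar b)$ for some $\bar a\subseteq P\cap A$. For complete $A$, $S_*(A)=\{\mathrm{tp}(\bar c/A): P\cap(A\cup\bar c)=P\cap A\text{ and }A\cup\bar c\text{ is complete}\}$. *)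

theory Defs
  imports Main
begin

text \<open>Terms: a vocabulary without function symbols (hence without constants), so terms are
  variables or parameters (elements of the monster model, whose universe is the type 'm).\<close>
datatype ('v,'m) tm = Var 'v | Par 'm

datatype ('r,'v,'m) fm =
    TT
  | Eq "('v,'m) tm" "('v,'m) tm"
  | Rel 'r "('v,'m) tm list"
  | Neg "('r,'v,'m) fm"
  | Conj "('r,'v,'m) fm" "('r,'v,'m) fm"
  | Ex 'v "('r,'v,'m) fm"

fun tm_vars :: "('v,'m) tm \<Rightarrow> 'v set" where
  "tm_vars (Var v) = {v}" | "tm_vars (Par a) = {}"

fun tm_pars :: "('v,'m) tm \<Rightarrow> 'm set" where
  "tm_pars (Var v) = {}" | "tm_pars (Par a) = {a}"

fun fv :: "('r,'v,'m) fm \<Rightarrow> 'v set" where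
  "fv TT = {}"
| "fv (Eq s t) = tm_vars s \<union> tm_vars t"
| "fv (Rel r ts) = (\<Union>t\<in>set ts. tm_vars t)"
| "fv (Neg \<phi>) = fv \<phi>"
| "fv (Conj \<phi> \<psi>) = fv \<phi> \<union> fv \<psi>"
| "fv (Ex v \<phi>) = fv \<phi> - {v}"

fun pars :: "('r,'v,'m) fm \<Rightarrow> 'm set" where
  "pars TT = {}"
| "pars (Eq s t) = tm_pars s \<union> tm_pars t"
| "pars (Rel r ts) = (\<Union>t\<in>set ts. tm_pars t)"
| "pars (Neg \<phi>) = pars \<phi>"
| "pars (Conj \<phi> \<psi>) = pars \<phi> \<union> pars \<psi>"
| "pars (Ex v \<phi>) = pars \<phi>"

fun wf :: "('r \<Rightarrow> nat) \<Rightarrow> ('r,'v,'m) fm \<Rightarrow> bool" where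
  "wf ar TT = True"
| "wf ar (Eq s t) = True"
| "wf ar (Rel r ts) = (length ts = ar r)"
| "wf ar (Neg \<phi>) = wf ar \<phi>"
| "wf ar (Conj \<phi> \<psi>) = (wf ar \<phi> \<and> wf ar \<psi>)"
| "wf ar (Ex v \<phi>) = wf ar \<phi>"

fun qfree :: "('r,'v,'m) fm \<Rightarrow> bool" where
  "qfree TT = True"
| "qfree (Eq s t) = True"
| "qfree (Rel r ts) = True"
| "qfree (Neg \<phi>) = qfree \<phi>"
| "qfree (Conj \<phi> \<psi>) = (qfree \<phi> \<and> qfree \<psi>)"
| "qfree (Ex v \<phi>) = False"

fun ev :: "('v \<Rightarrow> 'm) \<Rightarrow> ('v,'m) tm \<Rightarrow> 'm" where
  "ev e (Var v) = e v" | "ev e (Par a) = a"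

text \<open>Satisfaction in the substructure with domain D of the structure with interpretation I
  (the monster model has domain UNIV).  Quantifiers range over D.\<close>
fun sat :: "'m set \<Rightarrow> ('r \<Rightarrow> 'm list \<Rightarrow> bool) \<Rightarrow> ('v \<Rightarrow> 'm) \<Rightarrow> ('r,'v,'m) fm \<Rightarrow> bool" where
  "sat D I e TT = True"
| "sat D I e (Eq s t) = (ev e s = ev e t)"
| "sat D I e (Rel r ts) = I r (map (ev e) ts)"
| "sat D I e (Neg \<phi>) = (\<not> sat D I e \<phi>)"
| "sat D I e (Conj \<phi> \<psi>) = (sat D I e \<phi> \<and> sat D I e \<psi>)"
| "sat D I e (Ex v \<phi>) = (\<exists>a\<in>D. sat D I (e(v := a)) \<phi>)"

definition Pset :: "('r \<Rightarrow> 'm list \<Rightarrow> bool) \<Rightarrow> 'r \<Rightarrow> 'm set" where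
  "Pset I P = {a. I P [a]}"

definition elem_sub :: "('r \<Rightarrow> nat) \<Rightarrow> ('r \<Rightarrow> 'm list \<Rightarrow> bool) \<Rightarrow> 'v itself \<Rightarrow> 'm set \<Rightarrow> bool" where
  "elem_sub ar I _ M \<longleftrightarrow> M \<noteq> {} \<and>
     (\<forall>(\<phi>::('r,'v,'m) fm) e. wf ar \<phi> \<longrightarrow> pars \<phi> \<subseteq> M \<longrightarrow> e ` fv \<phi> \<subseteq> M \<longrightarrow>
        (sat M I e \<phi> \<longleftrightarrow> sat UNIV I e \<phi>))"

definition saturated :: "('r \<Rightarrow> nat) \<Rightarrow> ('r \<Rightarrow> 'm list \<Rightarrow> bool) \<Rightarrow> 'v itself \<Rightarrow> 'l rel \<Rightarrow> 'm set \<Rightarrow> bool" where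
  "saturated ar I _ lam M \<longleftrightarrow>
     (\<forall>B (q::('r,'v,'m) fm set) v. B \<subseteq> M \<longrightarrow> (card_of B, lam) \<in> ordLess \<longrightarrow>
        (\<forall>\<phi>\<in>q. wf ar \<phi> \<and> pars \<phi> \<subseteq> B \<and> fv \<phi> \<subseteq> {v}) \<longrightarrow>
        (\<forall>F. finite F \<longrightarrow> F \<subseteq> q \<longrightarrow> (\<exists>a\<in>M. \<forall>\<phi>\<in>F. sat M I (\<lambda>_. a) \<phi>)) \<longrightarrow>
        (\<exists>a\<in>M. \<forall>\<phi>\<in>q. sat M I (\<lambda>_. a) \<phi>))"

definition partial_elementary :: "('r \<Rightarrow> nat) \<Rightarrow> ('r \<Rightarrow> 'm list \<Rightarrow> bool) \<Rightarrow> 'v itself \<Rightarrow> 'm set \<Rightarrow> ('m \<Rightarrow> 'm) \<Rightarrow> bool" where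
  "partial_elementary ar I _ D f \<longleftrightarrow>
     (\<forall>(\<phi>::('r,'v,'m) fm) e. wf ar \<phi> \<longrightarrow> pars \<phi> = {} \<longrightarrow> e ` fv \<phi> \<subseteq> D \<longrightarrow>
        (sat UNIV I e \<phi> \<longleftrightarrow> sat UNIV I (f \<circ> e) \<phi>))"

definition automorphism :: "('r \<Rightarrow> nat) \<Rightarrow> ('r \<Rightarrow> 'm list \<Rightarrow> bool) \<Rightarrow> ('m \<Rightarrow> 'm) \<Rightarrow> bool" where
  "automorphism ar I g \<longleftrightarrow> bij g \<and> (\<forall>r xs. length xs = ar r \<longrightarrow> (I r xs \<longleftrightarrow> I r (map g xs)))"

definition strongly_homogeneous :: "('r \<Rightarrow> nat) \<Rightarrow> ('r \<Rightarrow> 'm list \<Rightarrow> bool) \<Rightarrow> 'v itself \<Rightarrow> 'k rel \<Rightarrow> bool" where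
  "strongly_homogeneous ar I V \<kappa> \<longleftrightarrow>
     (\<forall>D f. (card_of D, \<kappa>) \<in> ordLess \<longrightarrow> partial_elementary ar I V D f \<longrightarrow>
        (\<exists>g. automorphism ar I g \<and> (\<forall>x\<in>D. g x = f x)))"

text \<open>The monster model C (domain UNIV :: 'm set): kappa-saturated and strongly
  kappa-homogeneous for a (large) infinite cardinal kappa; "small" means of size less than kappa.\<close>
definition monster :: "('r \<Rightarrow> nat) \<Rightarrow> ('r \<Rightarrow> 'm list \<Rightarrow> bool) \<Rightarrow> 'v itself \<Rightarrow> 'k rel \<Rightarrow> bool" where
  "monster ar I V \<kappa> \<longleftrightarrow> Card_order \<kappa> \<and> \<not> finite (Field \<kappa>) \<and>
     saturated ar I V \<kappa> (UNIV :: 'm set) \<and> strongly_homogeneous ar I V \<kappa>"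

definition stably_embedded :: "('r \<Rightarrow> nat) \<Rightarrow> ('r \<Rightarrow> 'm list \<Rightarrow> bool) \<Rightarrow> 'v itself \<Rightarrow> 'r \<Rightarrow> bool" where
  "stably_embedded ar I _ P \<longleftrightarrow>
     (\<forall>(\<phi>::('r,'v,'m) fm) X. wf ar \<phi> \<longrightarrow> finite X \<longrightarrow> fv \<phi> \<subseteq> X \<longrightarrow>
        (\<exists>\<chi>::('r,'v,'m) fm. wf ar \<chi> \<and> pars \<chi> \<subseteq> Pset I P \<and> fv \<chi> \<subseteq> X \<and>
           (\<forall>e. e ` X \<subseteq> Pset I P \<longrightarrow> (sat UNIV I e \<phi> \<longleftrightarrow> sat (Pset I P) I e \<chi>))))"

definition zero_definable_in_P :: "('r \<Rightarrow> nat) \<Rightarrow> ('r \<Rightarrow> 'm list \<Rightarrow> bool) \<Rightarrow> 'v itself \<Rightarrow> 'r \<Rightarrow> bool" where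
  "zero_definable_in_P ar I _ P \<longleftrightarrow>
     (\<forall>(\<phi>::('r,'v,'m) fm) X. wf ar \<phi> \<longrightarrow> pars \<phi> = {} \<longrightarrow> finite X \<longrightarrow> fv \<phi> \<subseteq> X \<longrightarrow>
        (\<exists>\<chi>::('r,'v,'m) fm. wf ar \<chi> \<and> pars \<chi> = {} \<and> fv \<chi> \<subseteq> X \<and>
           (\<forall>e. e ` X \<subseteq> Pset I P \<longrightarrow> (sat UNIV I e \<phi> \<longleftrightarrow> sat (Pset I P) I e \<chi>))))"

definition has_QE :: "('r \<Rightarrow> nat) \<Rightarrow> ('r \<Rightarrow> 'm list \<Rightarrow> bool) \<Rightarrow> 'v itself \<Rightarrow> bool" where
  "has_QE ar I _ \<longleftrightarrow>
     (\<forall>\<phi>::('r,'v,'m) fm. wf ar \<phi> \<longrightarrow> pars \<phi> = {} \<longrightarrow>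
        (\<exists>\<chi>::('r,'v,'m) fm. qfree \<chi> \<and> wf ar \<chi> \<and> pars \<chi> = {} \<and> fv \<chi> \<subseteq> fv \<phi> \<and>
           (\<forall>e. sat UNIV I e \<phi> \<longleftrightarrow> sat UNIV I e \<chi>)))"

definition complete_set :: "('r \<Rightarrow> nat) \<Rightarrow> ('r \<Rightarrow> 'm list \<Rightarrow> bool) \<Rightarrow> 'r \<Rightarrow> 'v itself \<Rightarrow> 'm set \<Rightarrow> bool" where
  "complete_set ar I P _ A \<longleftrightarrow>
     (\<forall>(\<psi>::('r,'v,'m) fm) X. wf ar \<psi> \<longrightarrow> pars \<psi> \<subseteq> A \<longrightarrow> finite X \<longrightarrow> fv \<psi> \<subseteq> X \<longrightarrow>
        (\<exists>e. e ` X \<subseteq> Pset I P \<and> sat UNIV I e \<psi>) \<longrightarrow>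
        (\<exists>e. e ` X \<subseteq> Pset I P \<inter> A \<and> sat UNIV I e \<psi>))"

definition tp :: "('r \<Rightarrow> nat) \<Rightarrow> ('r \<Rightarrow> 'm list \<Rightarrow> bool) \<Rightarrow> 'v set \<Rightarrow> ('v \<Rightarrow> 'm) \<Rightarrow> 'm set \<Rightarrow> ('r,'v,'m) fm set" where
  "tp ar I X c A = {\<phi>. wf ar \<phi> \<and> pars \<phi> \<subseteq> A \<and> fv \<phi> \<subseteq> X \<and> sat UNIV I c \<phi>}"

definition Sstar :: "('r \<Rightarrow> nat) \<Rightarrow> ('r \<Rightarrow> 'm list \<Rightarrow> bool) \<Rightarrow> 'r \<Rightarrow> 'm set \<Rightarrow> 'v set \<Rightarrow> ('r,'v,'m) fm set set" where
  "Sstar ar I P A X = {tp ar I X c A | c.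
      Pset I P \<inter> (A \<union> c ` X) = Pset I P \<inter> A \<and> complete_set ar I P TYPE('v) (A \<union> c ` X)}"

definition partial_type :: "('r \<Rightarrow> nat) \<Rightarrow> ('r \<Rightarrow> 'm list \<Rightarrow> bool) \<Rightarrow> 'm set \<Rightarrow> 'v set \<Rightarrow> ('r,'v,'m) fm set \<Rightarrow> bool" where
  "partial_type ar I A X p \<longleftrightarrow>
     (\<forall>\<phi>\<in>p. wf ar \<phi> \<and> pars \<phi> \<subseteq> A \<and> fv \<phi> \<subseteq> X) \<and>
     (\<forall>F. finite F \<longrightarrow> F \<subseteq> p \<longrightarrow> (\<exists>e. \<forall>\<phi>\<in>F. sat UNIV I e \<phi>))"

end

theory Submission
  imports Defs
begin


fun stm :: "('v \<Rightarrow> 'm option) \<Rightarrow> ('v,'m) tm \<Rightarrow> ('v,'m) tm" where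
  "stm s (Var v) = (case s v of Some a \<Rightarrow> Par a | None \<Rightarrow> Var v)"
| "stm s (Par a) = Par a"

fun sfm :: "('v \<Rightarrow> 'm option) \<Rightarrow> ('r,'v,'m) fm \<Rightarrow> ('r,'v,'m) fm" where
  "sfm s TT = TT"
| "sfm s (Eq t u) = Eq (stm s t) (stm s u)"
| "sfm s (Rel r ts) = Rel r (map (stm s) ts)"
| "sfm s (Neg \<phi>) = Neg (sfm s \<phi>)"
| "sfm s (Conj \<phi> \<psi>) = Conj (sfm s \<phi>) (sfm s \<psi>)"
| "sfm s (Ex v \<phi>) = Ex v (sfm (s(v:=None)) \<phi>)"

definition mrg :: "('v \<Rightarrow> 'm option) \<Rightarrow> ('v \<Rightarrow> 'm) \<Rightarrow> 'v \<Rightarrow> 'm" where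
  "mrg s e = (\<lambda>v. case s v of Some a \<Rightarrow> a | None \<Rightarrow> e v)"

fun exs :: "'v list \<Rightarrow> ('r,'v,'m) fm \<Rightarrow> ('r,'v,'m) fm" where
  "exs [] \<phi> = \<phi>"
| "exs (v # vs) \<phi> = Ex v (exs vs \<phi>)"

fun conjs :: "('r,'v,'m) fm list \<Rightarrow> ('r,'v,'m) fm" where
  "conjs [] = TT"
| "conjs (\<phi> # l) = Conj \<phi> (conjs l)"

lemma ev_cong: "(\<forall>v\<in>tm_vars t. e v = e' v) \<Longrightarrow> ev e t = ev e' t"
  by (cases t) auto

lemma sat_cong: "(\<forall>v\<in>fv \<phi>. e v = e' v) \<Longrightarrow> sat D I e \<phi> = sat D I e' \<phi>"
proof (induction \<phi> arbitrary: e e')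
  case (Rel r ts)
  then have "map (ev e) ts = map (ev e') ts" by (auto intro!: ev_cong)
  then show ?case by (simp only: sat.simps)
next
  case (Ex v \<phi>)
  have "\<And>a. sat D I (e(v:=a)) \<phi> = sat D I (e'(v:=a)) \<phi>"
    using Ex.prems by (intro Ex.IH) auto
  then show ?case by simp
next
  case (Conj a b) then show ?case by (metis UnI1 UnI2 fv.simps(5) sat.simps(5))
next
  case (Eq a b) then show ?case by (metis UnCI ev_cong fv.simps(2) sat.simps(2))
qed simp_all

lemma ev_stm: "ev e (stm s t) = ev (mrg s e) t"
  by (cases t) (auto simp: mrg_def split: option.splits)

lemma mrg_upd: "mrg (s(v:=None)) (e(v:=a)) = (mrg s e)(v:=a)"
  by (auto simp: mrg_def intro!: ext split: option.splits)

lemma sat_sfm: "sat D I e (sfm s \<phi>) = sat D I (mrg s e) \<phi>"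
  by (induction \<phi> arbitrary: s e) (auto simp: ev_stm mrg_upd comp_def)

lemma tm_vars_stm: "tm_vars (stm s t) = tm_vars t - dom s"
  by (cases t) (auto split: option.splits)

lemma fv_sfm: "fv (sfm s \<phi>) = fv \<phi> - dom s"
  by (induction \<phi> arbitrary: s) (auto simp: tm_vars_stm)

lemma tm_pars_stm: "tm_pars (stm s t) \<subseteq> tm_pars t \<union> ran s"
  by (cases t) (auto split: option.splits simp: ran_def)

lemma pars_sfm: "pars (sfm s \<phi>) \<subseteq> pars \<phi> \<union> ran s"
proof (induction \<phi> arbitrary: s)
  case (Eq t u) then show ?case using tm_pars_stm[of s t] tm_pars_stm[of s u] by auto
next
  case (Rel r ts) then show ?case using tm_pars_stm[of s] by fastforce
next
  case (Ex v \<phi>)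
  have "ran (s(v:=None)) \<subseteq> ran s" by (auto simp: ran_def)
  then show ?case using Ex[of "s(v:=None)"] by (simp only: pars.simps sfm.simps fun_upd_def[symmetric]) blast
qed auto

lemma wf_sfm: "wf ar (sfm s \<phi>) = wf ar \<phi>"
  by (induction \<phi> arbitrary: s) auto

lemma sat_exs: "sat D I e (exs vs \<phi>) =
   (\<exists>e'. (\<forall>v. v \<notin> set vs \<longrightarrow> e' v = e v) \<and> (\<forall>v\<in>set vs. e' v \<in> D) \<and> sat D I e' \<phi>)"
proof (induction vs arbitrary: e)
  case Nil
  then show ?case by (auto simp: fun_eq_iff[symmetric])
next
  case (Cons v vs)
  show ?case
  proof
    assume "sat D I e (exs (v # vs) \<phi>)"
    then obtain a where a: "a \<in> D" "sat D I (e(v:=a)) (exs vs \<phi>)" by auto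
    then obtain e' where *: "(\<forall>w. w \<notin> set vs \<longrightarrow> e' w = (e(v:=a)) w)" "(\<forall>w\<in>set vs. e' w \<in> D)" "sat D I e' \<phi>"
      using Cons by blast
    then show "\<exists>e'. (\<forall>w. w \<notin> set (v#vs) \<longrightarrow> e' w = e w) \<and> (\<forall>w\<in>set (v#vs). e' w \<in> D) \<and> sat D I e' \<phi>"
    proof (intro exI[of _ e'] conjI)
      show "\<forall>w. w \<notin> set (v#vs) \<longrightarrow> e' w = e w" using * by auto
      show "\<forall>w\<in>set (v#vs). e' w \<in> D" using * a by (metis fun_upd_same set_ConsD)
    qed (use * in auto)
  next
    assume "\<exists>e'. (\<forall>w. w \<notin> set (v#vs) \<longrightarrow> e' w = e w) \<and> (\<forall>w\<in>set (v#vs). e' w \<in> D) \<and> sat D I e' \<phi>"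
    then obtain e' where e': "\<forall>w. w \<notin> set (v#vs) \<longrightarrow> e' w = e w" "\<forall>w\<in>set (v#vs). e' w \<in> D" "sat D I e' \<phi>"
      by blast
    have "sat D I (e(v:=e' v)) (exs vs \<phi>)"
      unfolding Cons using e' by (intro exI[of _ e']) auto
    then show "sat D I e (exs (v # vs) \<phi>)" using e' by auto
  qed
qed

lemma fv_exs: "fv (exs vs \<phi>) = fv \<phi> - set vs"
  by (induction vs) auto
lemma pars_exs: "pars (exs vs \<phi>) = pars \<phi>"
  by (induction vs) auto
lemma wf_exs: "wf ar (exs vs \<phi>) = wf ar \<phi>"
  by (induction vs) auto

lemma sat_conjs: "sat D I e (conjs l) = (\<forall>\<phi>\<in>set l. sat D I e \<phi>)"
  by (induction l) auto
lemma fv_conjs: "fv (conjs l) = (\<Union>\<phi>\<in>set l. fv \<phi>)"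
  by (induction l) auto
lemma pars_conjs: "pars (conjs l) = (\<Union>\<phi>\<in>set l. pars \<phi>)"
  by (induction l) auto
lemma wf_conjs: "wf ar (conjs l) = (\<forall>\<phi>\<in>set l. wf ar \<phi>)"
  by (induction l) auto

lemma finite_tm_pars: "finite (tm_pars t)" by (cases t) auto
lemma finite_tm_vars: "finite (tm_vars t)" by (cases t) auto
lemma finite_pars: "finite (pars \<phi>)" by (induction \<phi>) (auto simp: finite_tm_pars)
lemma finite_fv: "finite (fv \<phi>)" by (induction \<phi>) (auto simp: finite_tm_vars)



lemma es_lemma:
  fixes \<phi> :: "('r,'v,'m) fm"
  assumes "elem_sub ar I TYPE('v) M" "wf ar \<phi>" "pars \<phi> \<subseteq> M" "e ` fv \<phi> \<subseteq> M"
  shows "sat M I e \<phi> = sat UNIV I e \<phi>"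
  using assms unfolding elem_sub_def by blast

lemma down_to_M:
  fixes \<phi> :: "('r,'v,'m) fm"
  assumes es: "elem_sub ar I TYPE('v) M" and wf: "wf ar \<phi>" and pM: "pars \<phi> \<subseteq> M"
    and V: "finite V" "fv \<phi> \<subseteq> V" and s: "sat UNIV I e \<phi>"
  shows "\<exists>e'. (\<forall>v\<in>V. e' v \<in> M) \<and> sat UNIV I e' \<phi>"
proof -
  obtain vs where vs: "set vs = V" using V finite_list by blast
  have fv0: "fv (exs vs \<phi>) = {}" using V vs by (auto simp: fv_exs)
  have "sat UNIV I e (exs vs \<phi>)" unfolding sat_exs using s by blast
  then have "sat M I e (exs vs \<phi>)"
    using es_lemma[OF es, of "exs vs \<phi>" e] wf pM fv0 by (simp add: wf_exs pars_exs)
  then obtain e' where e': "\<forall>v\<in>V. e' v \<in> M" "sat M I e' \<phi>" unfolding sat_exs vs by blast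
  have "e' ` fv \<phi> \<subseteq> M" using e' V by auto
  then have "sat UNIV I e' \<phi>" using es_lemma[OF es wf pM] e' by blast
  then show ?thesis using e' by blast
qed

lemma complete_lemma:
  fixes ar :: "'r \<Rightarrow> nat" and I :: "'r \<Rightarrow> 'm list \<Rightarrow> bool" and P :: 'r
  assumes es: "elem_sub ar I TYPE('v) M" and P1: "ar P = 1"
    and B: "Pset I P \<inter> M \<subseteq> B" "B \<subseteq> M"
  shows "complete_set ar I P TYPE('v) B"
  unfolding complete_set_def
proof (intro allI impI)
  fix \<psi> :: "('r,'v,'m) fm" and X
  assume wf: "wf ar \<psi>" and pB: "pars \<psi> \<subseteq> B" and X: "finite X" "fv \<psi> \<subseteq> X"
    and ex: "\<exists>e. e ` X \<subseteq> Pset I P \<and> sat UNIV I e \<psi>"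
  then obtain e where e: "e ` X \<subseteq> Pset I P" "sat UNIV I e \<psi>" by blast
  obtain vs where vs: "set vs = X" using X finite_list by blast
  define \<phi> :: "('r,'v,'m) fm" where "\<phi> = Conj (conjs (map (\<lambda>v. Rel P [Var v]) vs)) \<psi>"
  have wf\<phi>: "wf ar \<phi>" using wf P1 by (auto simp: \<phi>_def wf_conjs)
  have p\<phi>: "pars \<phi> \<subseteq> M" using pB B by (auto simp: \<phi>_def pars_conjs)
  have f\<phi>: "fv \<phi> \<subseteq> X" using X vs by (auto simp: \<phi>_def fv_conjs)
  have s\<phi>: "sat UNIV I e \<phi>" using e vs by (auto simp: \<phi>_def sat_conjs Pset_def)
  obtain e' where e': "\<forall>v\<in>X. e' v \<in> M" "sat UNIV I e' \<phi>"
    using down_to_M[OF es wf\<phi> p\<phi> X(1) f\<phi> s\<phi>] by blast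
  have "e' ` X \<subseteq> Pset I P" using e' vs by (auto simp: \<phi>_def sat_conjs Pset_def)
  then have "e' ` X \<subseteq> Pset I P \<inter> B" using e' B by auto
  moreover have "sat UNIV I e' \<psi>" using e' by (simp add: \<phi>_def)
  ultimately show "\<exists>e. e ` X \<subseteq> Pset I P \<inter> B \<and> sat UNIV I e \<psi>" by blast
qed

lemma realize_fin:
  fixes p :: "('r,'v,'m) fm set"
  assumes es: "elem_sub ar I TYPE('v) M" and pt: "partial_type ar I A X p" and AM: "A \<subseteq> M"
    and fin: "finite p" "finite X"
  shows "\<exists>c. c ` X \<subseteq> M \<and> (\<forall>\<phi>\<in>p. sat UNIV I c \<phi>)"
proof -
  obtain l where l: "set l = p" using fin finite_list by blast
  obtain e where e: "\<forall>\<phi>\<in>p. sat UNIV I e \<phi>" using pt fin unfolding partial_type_def by blast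
  have wf: "wf ar (conjs l)" using pt l by (auto simp: partial_type_def wf_conjs)
  have pM: "pars (conjs l) \<subseteq> M" using pt l AM by (auto simp: partial_type_def pars_conjs)
  have fX: "fv (conjs l) \<subseteq> X" using pt l by (auto simp: partial_type_def fv_conjs)
  have "sat UNIV I e (conjs l)" using e l by (simp add: sat_conjs)
  then obtain e' where "\<forall>v\<in>X. e' v \<in> M" "sat UNIV I e' (conjs l)"
    using down_to_M[OF es wf pM fin(2) fX] by blast
  then show ?thesis using l by (auto simp: sat_conjs)
qed

lemma ordLess_Field:
  assumes "Card_order r" shows "((card_of A, r) \<in> ordLess) = ((card_of A, card_of (Field r)) \<in> ordLess)"
  using assms card_of_Field_ordIso ordLess_ordIso_trans ordIso_symmetric by blast



lemma finite_some_list: "finite F \<Longrightarrow> set (SOME l. set l = F) = F"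
  by (metis (mono_tags, lifting) finite_list someI_ex)

lemma const_img: "a \<in> M \<Longrightarrow> (\<lambda>_. a) ` S \<subseteq> M" by auto

lemma card_pars:
  fixes p :: "('r,'v,'m) fm set"
  assumes lam: "Card_order lam" and inf: "\<not> finite (Field lam)" and ps: "(card_of p, lam) \<in> ordLess"
  shows "(card_of (\<Union>\<phi>\<in>p. pars \<phi>), card_of (Field lam)) \<in> ordLess"
proof (cases "finite p")
  case True
  then have "finite (\<Union>\<phi>\<in>p. pars \<phi>)" by (simp add: finite_pars)
  then show ?thesis using inf finite_ordLess_infinite[OF card_of_Well_order card_of_Well_order]
    by (simp add: Field_card_of)
next
  case False
  have "\<forall>\<phi>\<in>p. (card_of (pars \<phi>), card_of p) \<in> ordLeq"
    using False finite_pars ordLess_imp_ordLeq finite_ordLess_infinite[OF card_of_Well_order card_of_Well_order]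
    by (metis Field_card_of)
  then have "(card_of (\<Union>\<phi>\<in>p. pars \<phi>), card_of p) \<in> ordLeq"
    using card_of_UNION_ordLeq_infinite[OF False] ordLeq_refl[OF card_of_Card_order] by blast
  then show ?thesis using ps ordLess_Field[OF lam] ordLeq_ordLess_trans by blast
qed

lemma realize_inf:
  fixes ar :: "'r \<Rightarrow> nat" and I :: "'r \<Rightarrow> 'm list \<Rightarrow> bool"
    and lam :: "'l rel" and M A :: "'m set" and X :: "'v set" and p :: "('r,'v,'m) fm set"
  assumes es: "elem_sub ar I TYPE('v) M" and sat: "saturated ar I TYPE('v) lam M"
    and lam: "Card_order lam" and inf: "\<not> finite (Field lam)"
    and pt: "partial_type ar I A X p" and AM: "A \<subseteq> M"
    and ps: "(card_of p, lam) \<in> ordLess" and Xs: "(card_of X, lam) \<in> ordLess"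
  shows "\<exists>c. c ` X \<subseteq> M \<and> (\<forall>\<phi>\<in>p. sat UNIV I c \<phi>)"
proof -
  define good where "good G \<longleftrightarrow> (\<forall>v a b. (v,a)\<in>G \<longrightarrow> (v,b)\<in>G \<longrightarrow> a=b) \<and> fst`G \<subseteq> X \<and> snd`G \<subseteq> M \<and>
     (\<forall>F. finite F \<longrightarrow> F \<subseteq> p \<longrightarrow> (\<exists>e. (\<forall>(v,a)\<in>G. e v = a) \<and> (\<forall>\<phi>\<in>F. sat UNIV I e \<phi>)))"
    for G :: "('v \<times> 'm) set"
  have pfs: "\<forall>F. finite F \<longrightarrow> F \<subseteq> p \<longrightarrow> (\<exists>e. \<forall>\<phi>\<in>F. sat UNIV I e \<phi>)"
    using pt unfolding partial_type_def by blast
  have good0: "good {}" unfolding good_def using pfs by simp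
  have goodF: "fst`G \<subseteq> X" if "good G" for G
    using that unfolding good_def by (rule conjunct1[OF conjunct2])
  have goodS: "snd`G \<subseteq> M" if "good G" for G
    using that unfolding good_def by (rule conjunct1[OF conjunct2[OF conjunct2]])
  have goodE0: "\<forall>F. finite F \<longrightarrow> F \<subseteq> p \<longrightarrow> (\<exists>e. (\<forall>(v,a)\<in>G. e v = a) \<and> (\<forall>\<phi>\<in>F. sat UNIV I e \<phi>))"
    if "good G" for G
    using that unfolding good_def by (rule conjunct2[OF conjunct2[OF conjunct2]])
  have goodE: "\<exists>e. (\<forall>(v,a)\<in>G. e v = a) \<and> (\<forall>\<phi>\<in>F. sat UNIV I e \<phi>)"
    if "good G" "finite F" "F \<subseteq> p" for G F
    using goodE0[OF that(1)] that(2,3) by blast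
  have "\<forall>C\<in>chains {G. good G}. \<Union>C \<in> {G. good G}"
  proof
    fix C assume "C \<in> chains {G. good G}"
    then have CG: "\<And>G. G \<in> C \<Longrightarrow> good G" and ch: "\<And>G H. G \<in> C \<Longrightarrow> H \<in> C \<Longrightarrow> G \<subseteq> H \<or> H \<subseteq> G"
      unfolding chains_def chain_subset_def by auto
    let ?U = "\<Union>C"
    have sv: "\<forall>v a b. (v,a)\<in>?U \<longrightarrow> (v,b)\<in>?U \<longrightarrow> a=b"
    proof (intro allI impI)
      fix v a b assume "(v,a)\<in>?U" "(v,b)\<in>?U"
      then obtain G H where "G\<in>C" "H\<in>C" "(v,a)\<in>G" "(v,b)\<in>H" by auto
      then have GH: "(v,a)\<in>G \<and> (v,b)\<in>G \<or> (v,a)\<in>H \<and> (v,b)\<in>H" using ch[of G H] by blast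
      have "\<forall>v a b. (v,a)\<in>G \<longrightarrow> (v,b)\<in>G \<longrightarrow> a=b"
        using CG[OF \<open>G\<in>C\<close>] unfolding good_def by (rule conjunct1)
      moreover have "\<forall>v a b. (v,a)\<in>H \<longrightarrow> (v,b)\<in>H \<longrightarrow> a=b"
        using CG[OF \<open>H\<in>C\<close>] unfolding good_def by (rule conjunct1)
      ultimately show "a = b" using GH by blast
    qed
    have key: "finite W \<Longrightarrow> W \<subseteq> fst`?U \<Longrightarrow> (\<exists>G0. (G0 = {} \<or> G0 \<in> C) \<and> W \<subseteq> fst`G0)" for W
    proof (induction W rule: finite_induct)
      case empty then show ?case by auto
    next
      case (insert w W)
      then obtain G0 where G0: "G0 = {} \<or> G0 \<in> C" "W \<subseteq> fst`G0" by auto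
      obtain H where H: "H \<in> C" "w \<in> fst`H" using insert.prems by auto
      show ?case
      proof (cases "G0 = {}")
        case True then show ?thesis using H G0 by (intro exI[of _ H]) auto
      next
        case False
        then have "G0 \<in> C" using G0 by auto
        then have "G0 \<subseteq> H \<or> H \<subseteq> G0" using ch H by auto
        then show ?thesis
        proof
          assume "G0 \<subseteq> H"
          then have "fst`G0 \<subseteq> fst`H" by (rule image_mono)
          then show ?thesis using H G0 by (intro exI[of _ H]) blast
        next
          assume "H \<subseteq> G0"
          then have "fst`H \<subseteq> fst`G0" by (rule image_mono)
          then show ?thesis using H G0 \<open>G0 \<in> C\<close> by (intro exI[of _ G0]) blast
        qed
      qed
    qed
    have sem: "\<exists>e. (\<forall>(v,a)\<in>?U. e v = a) \<and> (\<forall>\<phi>\<in>F. sat UNIV I e \<phi>)" if F: "finite F" "F \<subseteq> p" for F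
    proof -
      let ?V = "\<Union>\<phi>\<in>F. fv \<phi>"
      have finW: "finite (?V \<inter> fst`?U)" using F by (simp add: finite_fv)
      obtain G0 where G0: "G0 = {} \<or> G0 \<in> C" "?V \<inter> fst`?U \<subseteq> fst`G0" using key[OF finW Int_lower2] by blast
      have "good G0" using G0 CG good0 by auto
      then obtain e where e: "\<forall>(v,a)\<in>G0. e v = a" "\<forall>\<phi>\<in>F. sat UNIV I e \<phi>"
        using goodE[OF _ F] by blast
      define e' where "e' = (\<lambda>v. if v \<in> fst`?U then (THE a. (v,a)\<in>?U) else e v)"
      have e'U: "\<forall>(v,a)\<in>?U. e' v = a"
      proof (clarify)
        fix v a G assume "(v,a) \<in> G" "G \<in> C"
        then have "(v,a) \<in> ?U" by auto
        then have vU: "v \<in> fst`?U" by force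
        have "(THE a. (v,a)\<in>?U) = a"
          by (rule the_equality) (use \<open>(v,a) \<in> ?U\<close> sv in blast)+
        then show "e' v = a" unfolding e'_def using vU by simp
      qed
      have "\<forall>\<phi>\<in>F. sat UNIV I e' \<phi>"
      proof
        fix \<phi> assume \<phi>: "\<phi> \<in> F"
        have "\<forall>v\<in>fv \<phi>. e' v = e v"
        proof
          fix v assume v: "v \<in> fv \<phi>"
          show "e' v = e v"
          proof (cases "v \<in> fst`?U")
            case True
            then have "v \<in> fst`G0" using G0 v \<phi> by auto
            then obtain b where b: "(v,b) \<in> G0" by force
            then have "G0 \<in> C" using G0 by auto
            then have "(v,b) \<in> ?U" using b by auto
            then have "e' v = b" using e'U by auto
            then show ?thesis using e b by auto
          qed (simp add: e'_def)
        qed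
        then show "sat UNIV I e' \<phi>" using sat_cong[of \<phi> e' e] e \<phi> by auto
      qed
      then show ?thesis using e'U by blast
    qed
    have fs: "fst`?U \<subseteq> X" "snd`?U \<subseteq> M" using CG goodF goodS by fastforce+
    show "?U \<in> {G. good G}" unfolding mem_Collect_eq good_def
      using sv fs sem by (intro conjI allI impI) (simp_all only:)
  qed
  from Zorn_Lemma[OF this] obtain G where G: "good G" and max: "\<And>H. good H \<Longrightarrow> G \<subseteq> H \<Longrightarrow> H = G"
    by blast
  have svG0: "\<forall>v a b. (v,a)\<in>G \<longrightarrow> (v,b)\<in>G \<longrightarrow> a=b" using G unfolding good_def by (rule conjunct1)
  then have svG: "\<And>v a b. (v,a)\<in>G \<Longrightarrow> (v,b)\<in>G \<Longrightarrow> a=b" by blast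
  define cG where "cG v = (THE a. (v,a)\<in>G)" for v
  have cG2: "\<And>v a. (v,a) \<in> G \<Longrightarrow> cG v = a"
    unfolding cG_def by (rule the_equality) (auto dest: svG)
  have cG: "\<And>v. v \<in> fst`G \<Longrightarrow> (v, cG v) \<in> G" using cG2 by force
  have agree: "(\<forall>(v,a)\<in>G. e v = a) \<longleftrightarrow> (\<forall>v\<in>fst`G. e v = cG v)" for e
    using cG cG2 by force
  have full: "fst`G = X"
  proof (rule ccontr)
    assume "fst`G \<noteq> X"
    then obtain x where x: "x \<in> X" "x \<notin> fst`G" using goodF[OF G] by blast
    define \<sigma> where "\<sigma> v = (if v \<in> fst`G then Some (cG v) else None)" for v
    define vsF where "vsF F = (SOME vs. set vs = (\<Union>\<phi>\<in>F. fv \<phi>) - fst`G - {x})" for F :: "('r,'v,'m) fm set"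
    define lst where "lst F = (SOME l. set l = F)" for F :: "('r,'v,'m) fm set"
    define \<theta> where "\<theta> F = exs (vsF F) (sfm \<sigma> (conjs (lst F)))" for F
    have lst: "finite F \<Longrightarrow> set (lst F) = F" for F unfolding lst_def by (rule finite_some_list)
    have vsF: "finite F \<Longrightarrow> set (vsF F) = (\<Union>\<phi>\<in>F. fv \<phi>) - fst`G - {x}" for F
      unfolding vsF_def by (rule finite_some_list) (simp add: finite_fv)
    have dom\<sigma>: "dom \<sigma> = fst`G" unfolding \<sigma>_def dom_def by auto
    have ran\<sigma>: "ran \<sigma> \<subseteq> snd`G"
    proof
      fix b assume "b \<in> ran \<sigma>"
      then obtain v where v: "\<sigma> v = Some b" by (auto simp: ran_def)
      then have "v \<in> fst`G" "b = cG v" by (auto simp: \<sigma>_def split: if_splits)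
      then show "b \<in> snd`G" using cG by force
    qed
    have mrg\<sigma>: "mrg \<sigma> e v = (if v \<in> fst`G then cG v else e v)" for e v
      unfolding mrg_def \<sigma>_def by auto
    have char: "sat UNIV I (\<lambda>_. a) (\<theta> F) \<longleftrightarrow>
        (\<exists>e. (\<forall>v\<in>fst`G. e v = cG v) \<and> e x = a \<and> (\<forall>\<phi>\<in>F. sat UNIV I e \<phi>))" if F: "finite F" for F a
    proof
      assume "sat UNIV I (\<lambda>_. a) (\<theta> F)"
      then obtain e' where e': "\<forall>v. v \<notin> set (vsF F) \<longrightarrow> e' v = a" "sat UNIV I (mrg \<sigma> e') (conjs (lst F))"
        unfolding \<theta>_def sat_exs sat_sfm by blast
      show "\<exists>e. (\<forall>v\<in>fst`G. e v = cG v) \<and> e x = a \<and> (\<forall>\<phi>\<in>F. sat UNIV I e \<phi>)"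
        using e' x vsF[OF F] lst[OF F] by (intro exI[of _ "mrg \<sigma> e'"]) (auto simp: mrg\<sigma> sat_conjs)
    next
      assume "\<exists>e. (\<forall>v\<in>fst`G. e v = cG v) \<and> e x = a \<and> (\<forall>\<phi>\<in>F. sat UNIV I e \<phi>)"
      then obtain e where e: "\<forall>v\<in>fst`G. e v = cG v" "e x = a" "\<forall>\<phi>\<in>F. sat UNIV I e \<phi>" by blast
      define e' where "e' v = (if v \<in> set (vsF F) then e v else a)" for v
      have "\<forall>\<phi>\<in>F. sat UNIV I (mrg \<sigma> e') \<phi>"
      proof
        fix \<phi> assume \<phi>: "\<phi> \<in> F"
        have "\<forall>v\<in>fv \<phi>. mrg \<sigma> e' v = e v"
          using e \<phi> vsF[OF F] x by (auto simp: mrg\<sigma> e'_def)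
        then show "sat UNIV I (mrg \<sigma> e') \<phi>" using sat_cong[of \<phi> "mrg \<sigma> e'" e] e \<phi> by auto
      qed
      then have "sat UNIV I (mrg \<sigma> e') (conjs (lst F))" using lst[OF F] by (simp add: sat_conjs)
      then show "sat UNIV I (\<lambda>_. a) (\<theta> F)"
        unfolding \<theta>_def sat_exs sat_sfm by (intro exI[of _ e']) (auto simp: e'_def)
    qed
    define B where "B = (\<Union>\<phi>\<in>p. pars \<phi>) \<union> snd`G"
    have BM: "B \<subseteq> M" using pt AM goodS[OF G] unfolding B_def partial_type_def by blast
    have fv\<theta>: "fv (\<theta> F) \<subseteq> {x}" if "finite F" for F
      using vsF[OF that] lst[OF that] by (auto simp: \<theta>_def fv_exs fv_sfm fv_conjs dom\<sigma>)
    have pars\<theta>: "pars (\<theta> F) \<subseteq> B" if "finite F" "F \<subseteq> p" for F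
      using pars_sfm[of \<sigma> "conjs (lst F)"] ran\<sigma> lst[OF that(1)] that(2)
      by (auto simp: \<theta>_def pars_exs pars_conjs B_def) blast
    have wf\<theta>: "wf ar (\<theta> F)" if "finite F" "F \<subseteq> p" for F
      using lst[OF that(1)] that(2) pt by (auto simp: \<theta>_def wf_exs wf_sfm wf_conjs partial_type_def)
    have Bs: "(card_of B, lam) \<in> ordLess"
    proof -
      have 1: "(card_of (\<Union>\<phi>\<in>p. pars \<phi>), card_of (Field lam)) \<in> ordLess"
        by (rule card_pars[OF lam inf ps])
      have "snd`G = cG`(fst`G)" using cG cG2 by force
      then have "(card_of (snd`G), card_of (fst`G)) \<in> ordLeq" by (simp add: card_of_image)
      moreover have "(card_of (fst`G), card_of X) \<in> ordLeq" using goodF[OF G]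
        by (simp add: card_of_mono1)
      ultimately have "(card_of (snd`G), card_of (Field lam)) \<in> ordLess"
        using Xs ordLess_Field[OF lam] ordLeq_transitive ordLeq_ordLess_trans by blast
      then have "(card_of B, card_of (Field lam)) \<in> ordLess"
        unfolding B_def using card_of_Un_ordLess_infinite[OF inf 1] by blast
      then show ?thesis using ordLess_Field[OF lam] by blast
    qed
    let ?q = "\<theta> ` {F. finite F \<and> F \<subseteq> p}"
    have "\<exists>a\<in>M. \<forall>\<phi>\<in>?q. sat M I (\<lambda>_. a) \<phi>"
    proof (rule sat[unfolded saturated_def, rule_format, OF BM Bs])
      fix \<phi> assume "\<phi> \<in> ?q"
      then obtain F where F: "finite F" "F \<subseteq> p" "\<phi> = \<theta> F" by blast
      show "wf ar \<phi> \<and> pars \<phi> \<subseteq> B \<and> fv \<phi> \<subseteq> {x}"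
        using wf\<theta>[OF F(1,2)] pars\<theta>[OF F(1,2)] fv\<theta>[OF F(1)] F(3) by simp
    next
      fix Q assume Q: "finite Q" "Q \<subseteq> ?q"
      then obtain Fs where Fs: "Fs \<subseteq> {F. finite F \<and> F \<subseteq> p}" "finite Fs" "Q = \<theta> ` Fs"
        by (meson finite_subset_image)
      let ?F = "\<Union>Fs"
      have F: "finite ?F" "?F \<subseteq> p" using Fs by auto
      obtain e where e: "\<forall>(v,a)\<in>G. e v = a" "\<forall>\<phi>\<in>?F. sat UNIV I e \<phi>" using goodE[OF G F] by blast
      have "sat UNIV I (\<lambda>_. e x) (\<theta> ?F)" using char[OF F(1)] e agree by blast
      then have "sat UNIV I ((\<lambda>_. e x)(x := e x)) (\<theta> ?F)"
        by (metis (no_types) fun_upd_triv)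
      then have "sat UNIV I (\<lambda>_. e x) (Ex x (\<theta> ?F))" by auto
      then have "sat M I (\<lambda>_. e x) (Ex x (\<theta> ?F))"
        using es_lemma[OF es, of "Ex x (\<theta> ?F)" "\<lambda>_. e x"] wf\<theta>[OF F] pars\<theta>[OF F] BM fv\<theta>[OF F(1)]
        by auto
      then obtain a where a: "a \<in> M" "sat M I ((\<lambda>_. e x)(x:=a)) (\<theta> ?F)" by auto
      have "sat M I ((\<lambda>_. e x)(x:=a)) (\<theta> ?F) = sat M I (\<lambda>_. a) (\<theta> ?F)"
        using fv\<theta>[OF F(1)] by (intro sat_cong) auto
      then have "sat M I (\<lambda>_. a) (\<theta> ?F)" using a by simp
      then have "sat UNIV I (\<lambda>_. a) (\<theta> ?F)"
        using es_lemma[OF es wf\<theta>[OF F] subset_trans[OF pars\<theta>[OF F] BM] const_img[OF a(1)]] by simp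
      then obtain e2 where e2: "\<forall>v\<in>fst`G. e2 v = cG v" "e2 x = a" "\<forall>\<phi>\<in>?F. sat UNIV I e2 \<phi>"
        using char[OF F(1)] by blast
      have "\<forall>\<phi>\<in>Q. sat M I (\<lambda>_. a) \<phi>"
      proof
        fix \<phi> assume "\<phi> \<in> Q"
        then obtain Fi where Fi: "Fi \<in> Fs" "\<phi> = \<theta> Fi" using Fs by auto
        have Fi': "finite Fi" "Fi \<subseteq> p" using Fi Fs by auto
        have "sat UNIV I (\<lambda>_. a) (\<theta> Fi)" using char[OF Fi'(1)] e2 Fi by blast
        then show "sat M I (\<lambda>_. a) \<phi>"
          using es_lemma[OF es wf\<theta>[OF Fi'] subset_trans[OF pars\<theta>[OF Fi'] BM] const_img[OF a(1)]] Fi by simp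
      qed
      then show "\<exists>a\<in>M. \<forall>\<phi>\<in>Q. sat M I (\<lambda>_. a) \<phi>" using a by blast
    qed
    then obtain a where a: "a \<in> M" "\<forall>F. finite F \<longrightarrow> F \<subseteq> p \<longrightarrow> sat M I (\<lambda>_. a) (\<theta> F)" by blast
    have "good (insert (x,a) G)"
      unfolding good_def
    proof (intro conjI allI impI)
      show "\<And>v b c. (v,b) \<in> insert (x,a) G \<Longrightarrow> (v,c) \<in> insert (x,a) G \<Longrightarrow> b = c"
        using svG x by (auto simp: image_iff)
      show "fst ` insert (x,a) G \<subseteq> X" "snd ` insert (x,a) G \<subseteq> M" using x a goodF[OF G] goodS[OF G] by auto
    next
      fix F assume F: "finite F" "F \<subseteq> p"
      then have "sat UNIV I (\<lambda>_. a) (\<theta> F)"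
        using a(2) F es_lemma[OF es wf\<theta>[OF F] subset_trans[OF pars\<theta>[OF F] BM] const_img[OF a(1)]] by simp
      then obtain e where e: "\<forall>v\<in>fst`G. e v = cG v" "e x = a" "\<forall>\<phi>\<in>F. sat UNIV I e \<phi>"
        using char[OF F(1)] by blast
      then show "\<exists>e. (\<forall>(v,b)\<in>insert (x,a) G. e v = b) \<and> (\<forall>\<phi>\<in>F. sat UNIV I e \<phi>)"
        using agree by (intro exI[of _ e]) auto
    qed
    then have "insert (x,a) G = G" using max by blast
    then show False using x by force
  qed
  have "\<forall>\<phi>\<in>p. sat UNIV I cG \<phi>"
  proof
    fix \<phi> assume \<phi>: "\<phi> \<in> p"
    obtain e where e: "\<forall>(v,a)\<in>G. e v = a" "sat UNIV I e \<phi>" using goodE[OF G, of "{\<phi>}"] \<phi>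
      by (metis empty_subsetI finite.emptyI finite.insertI insertI1 insert_subset)
    have fvX: "fv \<phi> \<subseteq> X" using pt \<phi> unfolding partial_type_def by blast
    have "\<forall>v\<in>fv \<phi>. cG v = e v"
    proof
      fix v assume "v \<in> fv \<phi>"
      then have "(v, cG v) \<in> G" using fvX full cG by blast
      then show "cG v = e v" using e(1) by fastforce
    qed
    then show "sat UNIV I cG \<phi>" using sat_cong[of \<phi> cG e] e by auto
  qed
  moreover have "cG ` X \<subseteq> M" using full cG goodS[OF G] by force
  ultimately show ?thesis by blast
qed


theorem mainTheorem4:
  fixes ar :: "'r \<Rightarrow> nat" and I :: "'r \<Rightarrow> 'm list \<Rightarrow> bool" and P :: 'r
    and kap :: "'k rel" and lam :: "'l rel"
    and M A :: "'m set" and X :: "'v set" and p :: "('r,'v,'m) fm set"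
  assumes vars: "\<not> finite (UNIV :: 'v set)"
    and P_unary: "ar P = 1"
    and C_monster: "monster ar I TYPE('v) kap"
    and stab: "stably_embedded ar I TYPE('v) P"
    and zdef: "zero_definable_in_P ar I TYPE('v) P"
    and QE: "has_QE ar I TYPE('v)"
    and lam: "Card_order lam"
    and M_elem: "elem_sub ar I TYPE('v) M"
    and M_small: "(card_of M, kap) \<in> ordLess"
    and M_sat: "saturated ar I TYPE('v) lam M"
    and PM_A: "Pset I P \<inter> M \<subseteq> A" and A_M: "A \<subseteq> M"
    and p_type: "partial_type ar I A X p"
    and p_small: "(card_of p, lam) \<in> ordLess"
    and X_small: "(card_of X, lam) \<in> ordLess"
  shows "\<exists>q \<in> Sstar ar I P A X. p \<subseteq> q"
proof -
  obtain c where c: "c ` X \<subseteq> M" "\<forall>\<phi>\<in>p. sat UNIV I c \<phi>"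
  proof (cases "finite (Field lam)")
    case True
    have "(card_of p, card_of (Field lam)) \<in> ordLess" using p_small ordLess_Field[OF lam] by blast
    then have fp: "finite p" using True ordLess_imp_ordLeq card_of_ordLeq_finite by blast
    have "(card_of X, card_of (Field lam)) \<in> ordLess" using X_small ordLess_Field[OF lam] by blast
    then have fX: "finite X" using True ordLess_imp_ordLeq card_of_ordLeq_finite by blast
    show ?thesis using realize_fin[OF M_elem p_type A_M fp fX] that by blast
  next
    case False
    show ?thesis using realize_inf[OF M_elem M_sat lam False p_type A_M p_small X_small] that by blast
  qed
  have PA: "Pset I P \<inter> (A \<union> c ` X) = Pset I P \<inter> A" using c(1) PM_A by blast
  have comp: "complete_set ar I P TYPE('v) (A \<union> c ` X)"
    by (rule complete_lemma[OF M_elem P_unary]) (use PM_A A_M c(1) in blast)+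
  have "tp ar I X c A \<in> Sstar ar I P A X" unfolding Sstar_def using PA comp by blast
  moreover have "p \<subseteq> tp ar I X c A" using p_type c(2) unfolding tp_def partial_type_def by blast
  ultimately show ?thesis by blast
qed

end
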